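(* Let $M=(S,\mathrm{Act},P)$ be an MDP, $T\subseteq S$, $\mathrm{rew}\colon S\to\mathbb{R}_{\ge0}$, $\mathrm{opt}\in\{\min,\max\}$, and let $x\in[0,\infty]^S$ be such that (1) $x\le E^{\mathrm{opt}}(x)$ (pointwise) and (2) for all $s\in S$, $\Pr^{\overline{\mathrm{opt}}}_s(\Diamond T)=1$ implies $x(s)<\infty$. Then $x(s)\le\mathbb{E}^{\mathrm{opt}}_s(\Diamond T)$ for all $s\in S$.
   Context: An MDP is a tuple $M=(S,\mathrm{Act},P)$ with $S$ finite, $\mathrm{Act}$ finite, $P\colon S\times\mathrm{Act}\times S\to[0,1]$ with $\sum_{s'}P(s,a,s')\in\{0,1\}$; $\mathrm{Act}(s)=\{a\mid\sum_{s'}P(s,a,s')=1\}$ is nonempty for all $s$; $\mathrm{Post}(s,a)=\{s'\mid P(s,a,s')>0\}$. A strategy is $\sigma\colon S\to\mathrm{Act}$ with $\sigma(s)\in\mathrm{Act}(s)$, inducing a Markov chain with transitions $P(s,\sigma(s),\cdot)$; $\Pr^\sigma_s(\Diamond T)$ is the probability of visiting $T$ from $s$, $\Pr^{\mathrm{opt}}_s(\Diamond T)=\mathrm{opt}_\sigma\Pr^\sigma_s(\Diamond T)$, and $\overline{\min}=\max,\overline{\max}=\min$. For an infinite path $s_0s_1\ldots$, the accumulated reward is $\sum_{k=0}^{n-1}\mathrm{rew}(s_k)$ where $n=\min\{i\mid s_i\in T\}$ if $T$ is visited, and $\infty$ if $T$ is never visited. $\mathbb{E}^\sigma_s(\Diamond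 T)$ is its expectation in the Markov chain induced by $\sigma$ started at $s$, and $\mathbb{E}^{\mathrm{opt}}_s(\Diamond T)=\mathrm{opt}_\sigma\mathbb{E}^\sigma_s(\Diamond T)$. The reward Bellman operator $E^{\mathrm{opt}}\colon[0,\infty]^S\to[0,\infty]^S$ is $E^{\mathrm{opt}}(x)(s)=0$ for $s\in T$ and $\mathrm{rew}(s)+\mathrm{opt}_{a\in\mathrm{Act}(s)}\sum_{s'\in\mathrm{Post}(s,a)}P(s,a,s')x(s')$ for $s\notin T$, with $p\cdot\infty=\infty$ for $p>0$ and $a+\infty=\infty$. *)

theory Defs
  imports Complex_Main "HOL-Library.Extended_Nonnegative_Real"
begin

definition is_mdp :: "('s::finite \<Rightarrow> 'a::finite \<Rightarrow> 's \<Rightarrow> real) \<Rightarrow> bool" where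
  "is_mdp P \<longleftrightarrow> (\<forall>s a s'. 0 \<le> P s a s' \<and> P s a s' \<le> 1)
     \<and> (\<forall>s a. (\<Sum>s'\<in>UNIV. P s a s') \<in> {0, 1})
     \<and> (\<forall>s. \<exists>a. (\<Sum>s'\<in>UNIV. P s a s') = 1)"

definition Act :: "('s::finite \<Rightarrow> 'a \<Rightarrow> 's \<Rightarrow> real) \<Rightarrow> 's \<Rightarrow> 'a set" where
  "Act P s = {a. (\<Sum>s'\<in>UNIV. P s a s') = 1}"

definition Post :: "('s \<Rightarrow> 'a \<Rightarrow> 's \<Rightarrow> real) \<Rightarrow> 's \<Rightarrow> 'a \<Rightarrow> 's set" where
  "Post P s a = {s'. P s a s' > 0}"

definition is_strategy :: "('s::finite \<Rightarrow> 'a \<Rightarrow> 's \<Rightarrow> real) \<Rightarrow> ('s \<Rightarrow> 'a) \<Rightarrow> bool" where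
  "is_strategy P \<sigma> \<longleftrightarrow> (\<forall>s. \<sigma> s \<in> Act P s)"

text \<open>Probability of the cylinder set of a finite path in the Markov chain induced by \<sigma>.\<close>
definition path_prob :: "('s \<Rightarrow> 'a \<Rightarrow> 's \<Rightarrow> real) \<Rightarrow> ('s \<Rightarrow> 'a) \<Rightarrow> 's list \<Rightarrow> ennreal" where
  "path_prob P \<sigma> xs = ennreal (\<Prod>k<length xs - 1. P (xs ! k) (\<sigma> (xs ! k)) (xs ! Suc k))"

definition first_hit_paths :: "'s set \<Rightarrow> 's \<Rightarrow> nat \<Rightarrow> 's list set" where
  "first_hit_paths T s n = {xs. length xs = Suc n \<and> xs ! 0 = s \<and> xs ! n \<in> T
                                \<and> (\<forall>k<n. xs ! k \<notin> T)}"

text \<open>Pr^\<sigma>_s(\<diamond>T): measure of the disjoint union of the first-hit cylinder sets.\<close>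
definition reach_prob :: "('s::finite \<Rightarrow> 'a \<Rightarrow> 's \<Rightarrow> real) \<Rightarrow> ('s \<Rightarrow> 'a) \<Rightarrow> 's set \<Rightarrow> 's \<Rightarrow> ennreal" where
  "reach_prob P \<sigma> T s = (\<Sum>n. \<Sum>xs\<in>first_hit_paths T s n. path_prob P \<sigma> xs)"

text \<open>On a path first visiting T at
  position n the reward is the sum of rew over positions < n (determined by the prefix);
  on paths never visiting T the reward is \<infinity>, contributing \<infinity> * Pr(never T)
  (which is 0 if that probability is 0).\<close>
definition exp_rew :: "('s::finite \<Rightarrow> 'a \<Rightarrow> 's \<Rightarrow> real) \<Rightarrow> ('s \<Rightarrow> 'a) \<Rightarrow> 's set \<Rightarrow> ('s \<Rightarrow> real)
    \<Rightarrow> 's \<Rightarrow> ennreal" where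
  "exp_rew P \<sigma> T rew s =
     (\<Sum>n. \<Sum>xs\<in>first_hit_paths T s n. path_prob P \<sigma> xs * ennreal (\<Sum>k<n. rew (xs ! k)))
     + top * (1 - reach_prob P \<sigma> T s)"

datatype opt = Min | Max

fun opt_of :: "opt \<Rightarrow> ennreal set \<Rightarrow> ennreal" where
  "opt_of Min A = Inf A"
| "opt_of Max A = Sup A"

fun dual :: "opt \<Rightarrow> opt" where
  "dual Min = Max"
| "dual Max = Min"

definition reach_prob_opt :: "opt \<Rightarrow> ('s::finite \<Rightarrow> 'a \<Rightarrow> 's \<Rightarrow> real) \<Rightarrow> 's set \<Rightarrow> 's \<Rightarrow> ennreal" where
  "reach_prob_opt opt P T s = opt_of opt {reach_prob P \<sigma> T s | \<sigma>. is_strategy P \<sigma>}"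

definition exp_rew_opt :: "opt \<Rightarrow> ('s::finite \<Rightarrow> 'a \<Rightarrow> 's \<Rightarrow> real) \<Rightarrow> 's set \<Rightarrow> ('s \<Rightarrow> real)
    \<Rightarrow> 's \<Rightarrow> ennreal" where
  "exp_rew_opt opt P T rew s = opt_of opt {exp_rew P \<sigma> T rew s | \<sigma>. is_strategy P \<sigma>}"

definition bellman :: "opt \<Rightarrow> ('s::finite \<Rightarrow> 'a \<Rightarrow> 's \<Rightarrow> real) \<Rightarrow> 's set \<Rightarrow> ('s \<Rightarrow> real)
    \<Rightarrow> ('s \<Rightarrow> ennreal) \<Rightarrow> 's \<Rightarrow> ennreal" where
  "bellman opt P T rew x s =
     (if s \<in> T then 0
      else ennreal (rew s) + opt_of opt ((\<lambda>a. \<Sum>s'\<in>Post P s a. ennreal (P s a s') * x s') ` Act P s))"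

end

theory Submission
  imports Defs
begin

lemma fhp_0: "first_hit_paths T u 0 = (if u \<in> T then {[u]} else {})"
  unfolding first_hit_paths_def
  by (auto simp: length_Suc_conv)

lemma fhp_Suc: "first_hit_paths T u (Suc n) =
   (if u \<in> T then {} else (\<lambda>ys. u # ys) ` (\<Union>v. first_hit_paths T v n))"
proof (cases "u \<in> T")
  case True
  then show ?thesis unfolding first_hit_paths_def by auto
next
  case False
  show ?thesis
  proof (rule set_eqI, rule iffI)
    fix xs assume xs: "xs \<in> first_hit_paths T u (Suc n)"
    then obtain y ys where e: "xs = y # ys" unfolding first_hit_paths_def by (cases xs) auto
    have "y = u" using xs e unfolding first_hit_paths_def by auto
    moreover have "ys \<in> first_hit_paths T (ys ! 0) n"
      using xs e unfolding first_hit_paths_def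
      by (auto simp del: nth_Cons_Suc simp add: nth_Cons_Suc[symmetric] dest: spec[of _ "Suc _"])
    ultimately show "xs \<in> (if u \<in> T then {} else (\<lambda>ys. u # ys) ` (\<Union>v. first_hit_paths T v n))"
      using False e by auto
  next
    fix xs assume "xs \<in> (if u \<in> T then {} else (\<lambda>ys. u # ys) ` (\<Union>v. first_hit_paths T v n))"
    then obtain v ys where e: "xs = u # ys" and ys: "ys \<in> first_hit_paths T v n" using False by auto
    show "xs \<in> first_hit_paths T u (Suc n)"
    proof -
      have "\<forall>k<Suc n. (u # ys) ! k \<notin> T"
      proof (intro allI impI)
        fix k assume "k < Suc n"
        then show "(u # ys) ! k \<notin> T" using ys False unfolding first_hit_paths_def
          by (cases k) auto
      qed
      then show ?thesis using ys unfolding e first_hit_paths_def by simp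
    qed
  qed
qed

lemma fhp_finite: "finite (first_hit_paths T (u::'s::finite) n)"
proof -
  have "first_hit_paths T u n \<subseteq> {xs. set xs \<subseteq> (UNIV::'s set) \<and> length xs = Suc n}"
    unfolding first_hit_paths_def by auto
  moreover have "finite {xs. set xs \<subseteq> (UNIV::'s set) \<and> length xs = Suc n}"
    by (rule finite_lists_length_eq) simp
  ultimately show ?thesis by (rule finite_subset)
qed

lemma fhp_hd: "ys \<in> first_hit_paths T v n \<Longrightarrow> ys ! 0 = v \<and> length ys = Suc n"
  unfolding first_hit_paths_def by auto

lemma path_prob_Cons:
  assumes "length ys = Suc n" and nn: "\<forall>s a s'. 0 \<le> P s a s'"
  shows "path_prob P \<sigma> (u # ys) = ennreal (P u (\<sigma> u) (ys ! 0)) * path_prob P \<sigma> ys"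
proof -
  have h: "(\<Prod>k<length (u # ys) - 1. P ((u#ys) ! k) (\<sigma> ((u#ys) ! k)) ((u#ys) ! Suc k))
      = P u (\<sigma> u) (ys ! 0) * (\<Prod>k<length ys - 1. P (ys ! k) (\<sigma> (ys ! k)) (ys ! Suc k))"
    using assms(1) by (simp only: length_Cons diff_Suc_1 prod.lessThan_Suc_shift nth_Cons_Suc nth_Cons_0)
  have n2: "0 \<le> (\<Prod>k<length ys - 1. P (ys ! k) (\<sigma> (ys ! k)) (ys ! Suc k))"
    by (rule prod_nonneg) (use nn in blast)
  have n1: "0 \<le> P u (\<sigma> u) (ys ! 0)" using nn by blast
  show ?thesis unfolding path_prob_def h by (rule ennreal_mult[OF n1 n2])
qed


lemma sum_Cons_paths:
  assumes "u \<notin> T"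
  shows "(\<Sum>xs\<in>first_hit_paths T (u::'s::finite) (Suc n). f xs)
       = (\<Sum>v\<in>UNIV. \<Sum>ys\<in>first_hit_paths T v n. f (u # ys))"
proof -
  have "(\<Sum>xs\<in>first_hit_paths T u (Suc n). f xs)
      = (\<Sum>xs\<in>(\<lambda>ys. u # ys) ` (\<Union>v. first_hit_paths T v n). f xs)"
    using assms by (simp add: fhp_Suc)
  also have "\<dots> = (\<Sum>ys\<in>(\<Union>v. first_hit_paths T v n). f (u # ys))"
    by (subst sum.reindex) (auto simp: inj_on_def)
  also have "\<dots> = (\<Sum>v\<in>UNIV. \<Sum>ys\<in>first_hit_paths T v n. f (u # ys))"
    by (rule sum.UNION_disjoint) (auto simp: fhp_finite dest: fhp_hd)
  finally show ?thesis .
qed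

lemma suminf_head_enn: "(\<Sum>n. f n) = f 0 + (\<Sum>n. f (Suc n) :: ennreal)"
  using suminf_offset[of f 1] by (simp add: add.commute)

lemma avg_lt:
  fixes q :: "'s::finite \<Rightarrow> real" and f :: "'s \<Rightarrow> ennreal"
  assumes q0: "\<forall>w. 0 \<le> q w" and q1: "sum q UNIV = 1" and f1: "\<forall>w. f w \<le> 1"
    and qv: "q v > 0" and fv: "f v < 1"
  shows "(\<Sum>w\<in>UNIV. ennreal (q w) * f w) < 1"
proof -
  define g where "g w = enn2real (f w)" for w
  have fg: "f w = ennreal (g w)" for w
  proof -
    have "f w < top" using f1 by (metis ennreal_one_less_top le_less_trans)
    then show ?thesis unfolding g_def by simp
  qed
  have g1: "g w \<le> 1" for w using f1 fg by (metis ennreal_le_1)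
  have "ennreal (g v) < ennreal 1" using fv fg by (metis ennreal_1)
  then have gv: "g v < 1" by (subst (asm) ennreal_less_iff) (simp_all add: g_def)
  have "(\<Sum>w\<in>UNIV. ennreal (q w) * f w) = ennreal (\<Sum>w\<in>UNIV. q w * g w)"
  proof -
    have g0: "0 \<le> g w" for w by (simp add: g_def)
    have "ennreal (q w) * f w = ennreal (q w * g w)" for w
      by (simp only: fg ennreal_mult''[OF g0])
    then show ?thesis using q0 g0 by (simp add: sum_ennreal)
  qed
  moreover have "(\<Sum>w\<in>UNIV. q w * g w) < (\<Sum>w\<in>UNIV. q w)"
  proof (rule sum_strict_mono_ex1)
    show "\<forall>x\<in>UNIV. q x * g x \<le> q x" using q0 g1 by (simp add: mult_left_le)
    show "\<exists>a\<in>UNIV. q a * g a < q a" using qv gv by (intro bexI[of _ v]) auto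
  qed simp
  ultimately show ?thesis using q1 by (simp add: ennreal_lessI)
qed

lemma avg_gt:
  fixes q :: "'s::finite \<Rightarrow> real" and f :: "'s \<Rightarrow> ennreal"
  assumes q0: "\<forall>w. 0 \<le> q w" and q1: "sum q UNIV = 1" and f1: "\<forall>w. f w \<le> 1"
    and fm: "\<forall>w. q w > 0 \<longrightarrow> m \<le> f w"
    and qv: "q v > 0" and fv: "m < f v"
  shows "m < (\<Sum>w\<in>UNIV. ennreal (q w) * f w)"
proof -
  define g where "g w = enn2real (f w)" for w
  have fg: "f w = ennreal (g w)" for w
  proof -
    have "f w < top" using f1 by (metis ennreal_one_less_top le_less_trans)
    then show ?thesis unfolding g_def by simp
  qed
  have mtop: "m < top" using fv f1 by (metis ennreal_one_less_top le_less_trans less_trans)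
  define mr where "mr = enn2real m"
  have mm': "m = ennreal mr" unfolding mr_def using mtop by simp
  have mr0: "0 \<le> mr" unfolding mr_def by simp
  have "(\<Sum>w\<in>UNIV. ennreal (q w) * f w) = ennreal (\<Sum>w\<in>UNIV. q w * g w)"
  proof -
    have g0: "0 \<le> g w" for w by (simp add: g_def)
    have "ennreal (q w) * f w = ennreal (q w * g w)" for w
      by (simp only: fg ennreal_mult''[OF g0])
    then show ?thesis using q0 g0 by (simp add: sum_ennreal)
  qed
  moreover have "(\<Sum>w\<in>UNIV. q w * mr) < (\<Sum>w\<in>UNIV. q w * g w)"
  proof (rule sum_strict_mono_ex1)
    show "\<forall>x\<in>UNIV. q x * mr \<le> q x * g x"
    proof
      fix x
      show "q x * mr \<le> q x * g x"
      proof (cases "q x > 0")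
        case True
        then have "ennreal mr \<le> ennreal (g x)" using fm fg mm' by metis
        then have "mr \<le> g x" using g_def by (simp add: mr0)
        then show ?thesis using q0 by (simp add: mult_left_mono)
      next
        case False then have "q x = 0" using q0 by (metis less_eq_real_def)
        then show ?thesis by simp
      qed
    qed
    have "mr < g v" using fv fg mm' by (metis ennreal_less_iff mr0)
    then show "\<exists>a\<in>UNIV. q a * mr < q a * g a" using qv by (intro bexI[of _ v]) auto
  qed simp
  moreover have "(\<Sum>w\<in>UNIV. q w * mr) = mr" using q1 by (simp add: sum_distrib_right[symmetric])
  ultimately show ?thesis using mm' by (simp add: ennreal_lessI mr0 ennreal_less_iff)
qed

locale mc =
  fixes P :: "'s::finite \<Rightarrow> 'a::finite \<Rightarrow> 's \<Rightarrow> real" and \<sigma> :: "'s \<Rightarrow> 'a" and T :: "'s set"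
  assumes mdp: "is_mdp P" and strat: "is_strategy P \<sigma>"
begin

lemma nn: "\<forall>s a s'. 0 \<le> P s a s'" using mdp unfolding is_mdp_def by blast

lemma sumP: "(\<Sum>v\<in>UNIV. P u (\<sigma> u) v) = 1"
  using strat unfolding is_strategy_def Act_def by blast

definition pr :: "'s \<Rightarrow> 's \<Rightarrow> ennreal" where "pr u v = ennreal (P u (\<sigma> u) v)"

lemma sum_pr: "(\<Sum>v\<in>UNIV. pr u v) = 1"
  unfolding pr_def using nn sumP by (subst sum_ennreal) auto

lemma pr_zero: "\<not> P u (\<sigma> u) v > 0 \<Longrightarrow> pr u v = 0"
  unfolding pr_def using nn by (metis ennreal_eq_0_iff not_less)

fun mm :: "nat \<Rightarrow> 's \<Rightarrow> ennreal" where
  "mm 0 u = (if u \<in> T then 1 else 0)"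
| "mm (Suc n) u = (if u \<in> T then 0 else (\<Sum>v\<in>UNIV. pr u v * mm n v))"

lemma mm_eq: "(\<Sum>xs\<in>first_hit_paths T u n. path_prob P \<sigma> xs) = mm n u"
proof (induction n arbitrary: u)
  case 0
  then show ?case by (simp add: fhp_0 path_prob_def)
next
  case (Suc n)
  show ?case
  proof (cases "u \<in> T")
    case True then show ?thesis by (simp add: fhp_Suc)
  next
    case False
    have "(\<Sum>xs\<in>first_hit_paths T u (Suc n). path_prob P \<sigma> xs)
        = (\<Sum>v\<in>UNIV. \<Sum>ys\<in>first_hit_paths T v n. path_prob P \<sigma> (u # ys))"
      by (rule sum_Cons_paths[OF False])
    also have "\<dots> = (\<Sum>v\<in>UNIV. \<Sum>ys\<in>first_hit_paths T v n. pr u v * path_prob P \<sigma> ys)"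
    proof (intro sum.cong refl)
      fix v ys assume "ys \<in> first_hit_paths T v n"
      then have "ys ! 0 = v \<and> length ys = Suc n" by (rule fhp_hd)
      then have "ys ! 0 = v" "length ys = Suc n" by simp_all
      then show "path_prob P \<sigma> (u # ys) = pr u v * path_prob P \<sigma> ys"
        using path_prob_Cons[OF _ nn] unfolding pr_def by metis
    qed
    also have "\<dots> = (\<Sum>v\<in>UNIV. pr u v * mm n v)"
      by (simp add: sum_distrib_left[symmetric] Suc.IH)
    finally show ?thesis using False by simp
  qed
qed

fun FF :: "('s \<Rightarrow> real) \<Rightarrow> nat \<Rightarrow> 's \<Rightarrow> ennreal" where
  "FF rew 0 u = 0"
| "FF rew (Suc n) u = (if u \<in> T then 0 else
     (\<Sum>v\<in>UNIV. pr u v * (ennreal (rew u) * mm n v + FF rew n v)))"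

lemma FF_eq:
  assumes r0: "\<forall>s. 0 \<le> rew s"
  shows "(\<Sum>xs\<in>first_hit_paths T u n. path_prob P \<sigma> xs * ennreal (\<Sum>k<n. rew (xs ! k))) = FF rew n u"
proof (induction n arbitrary: u)
  case 0
  then show ?case by simp
next
  case (Suc n)
  show ?case
  proof (cases "u \<in> T")
    case True then show ?thesis by (simp add: fhp_Suc)
  next
    case False
    have "(\<Sum>xs\<in>first_hit_paths T u (Suc n). path_prob P \<sigma> xs * ennreal (\<Sum>k<Suc n. rew (xs ! k)))
        = (\<Sum>v\<in>UNIV. \<Sum>ys\<in>first_hit_paths T v n.
             path_prob P \<sigma> (u # ys) * ennreal (\<Sum>k<Suc n. rew ((u # ys) ! k)))"
      by (rule sum_Cons_paths[OF False])
    also have "\<dots> = (\<Sum>v\<in>UNIV. \<Sum>ys\<in>first_hit_paths T v n.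
             pr u v * (ennreal (rew u) * path_prob P \<sigma> ys
                       + path_prob P \<sigma> ys * ennreal (\<Sum>k<n. rew (ys ! k))))"
    proof (intro sum.cong refl)
      fix v ys assume "ys \<in> first_hit_paths T v n"
      then have "ys ! 0 = v \<and> length ys = Suc n" by (rule fhp_hd)
      then have "ys ! 0 = v" "length ys = Suc n" by simp_all
      then have e1: "path_prob P \<sigma> (u # ys) = pr u v * path_prob P \<sigma> ys"
        using path_prob_Cons[OF _ nn] unfolding pr_def by metis
      have e2: "(\<Sum>k<Suc n. rew ((u # ys) ! k)) = rew u + (\<Sum>k<n. rew (ys ! k))"
        by (simp only: sum.lessThan_Suc_shift nth_Cons_0 nth_Cons_Suc)
      have e3: "ennreal (rew u + (\<Sum>k<n. rew (ys ! k))) = ennreal (rew u) + ennreal (\<Sum>k<n. rew (ys ! k))"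
        using r0 by (simp add: ennreal_plus sum_nonneg)
      show "path_prob P \<sigma> (u # ys) * ennreal (\<Sum>k<Suc n. rew ((u # ys) ! k))
          = pr u v * (ennreal (rew u) * path_prob P \<sigma> ys
                       + path_prob P \<sigma> ys * ennreal (\<Sum>k<n. rew (ys ! k)))"
        unfolding e1 e2 e3 by (simp add: algebra_simps)
    qed
    also have "\<dots> = (\<Sum>v\<in>UNIV. pr u v * (ennreal (rew u) * mm n v + FF rew n v))"
      by (simp add: sum_distrib_left sum.distrib distrib_left Suc.IH[symmetric] mm_eq[symmetric])
    finally show ?thesis using False by simp
  qed
qed


fun qr :: "nat \<Rightarrow> 's \<Rightarrow> ennreal" where
  "qr 0 u = 1"
| "qr (Suc N) u = (if u \<in> T then 0 else (\<Sum>v\<in>UNIV. pr u v * qr N v))"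

lemma cons: "(\<Sum>n<N. mm n u) + qr N u = 1"
proof (induction N arbitrary: u)
  case 0
  then show ?case by simp
next
  case (Suc N)
  show ?case
  proof (cases "u \<in> T")
    case True
    then show ?thesis by (simp del: sum.lessThan_Suc add: sum.lessThan_Suc_shift)
  next
    case False
    have "(\<Sum>n<Suc N. mm n u) + qr (Suc N) u
        = (\<Sum>n<N. \<Sum>v\<in>UNIV. pr u v * mm n v) + (\<Sum>v\<in>UNIV. pr u v * qr N v)"
      using False by (simp del: sum.lessThan_Suc add: sum.lessThan_Suc_shift)
    also have "(\<Sum>n<N. \<Sum>v\<in>UNIV. pr u v * mm n v) = (\<Sum>v\<in>UNIV. \<Sum>n<N. pr u v * mm n v)"
      by (rule sum.swap)
    also have "(\<Sum>v\<in>UNIV. \<Sum>n<N. pr u v * mm n v) + (\<Sum>v\<in>UNIV. pr u v * qr N v)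
        = (\<Sum>v\<in>UNIV. pr u v * ((\<Sum>n<N. mm n v) + qr N v))"
      by (simp add: sum_distrib_left sum.distrib distrib_left)
    also have "\<dots> = 1" by (simp add: Suc.IH sum_pr)
    finally show ?thesis .
  qed
qed

definition reach :: "'s \<Rightarrow> ennreal" where "reach u = (\<Sum>n. mm n u)"

lemma reach_eq: "reach_prob P \<sigma> T u = reach u"
  unfolding reach_prob_def reach_def by (simp add: mm_eq)

lemma partial_le1: "(\<Sum>n<N. mm n u) \<le> 1"
  using cons[where N=N and u=u] by (metis le_iff_add)

lemma reach_le1: "reach u \<le> 1"
  unfolding reach_def by (rule suminf_le_const[OF summableI partial_le1])

lemma reach_T: "u \<in> T \<Longrightarrow> reach u = 1"
  unfolding reach_def by (subst suminf_head_enn) simp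

lemma reach_step: "u \<notin> T \<Longrightarrow> reach u = (\<Sum>v\<in>UNIV. pr u v * reach v)"
proof -
  assume u: "u \<notin> T"
  have "reach u = (\<Sum>n. mm (Suc n) u)" unfolding reach_def using u by (subst suminf_head_enn) simp
  also have "\<dots> = (\<Sum>n. \<Sum>v\<in>UNIV. pr u v * mm n v)" using u by simp
  also have "\<dots> = (\<Sum>v\<in>UNIV. \<Sum>n. pr u v * mm n v)" by (rule suminf_sum) simp
  also have "\<dots> = (\<Sum>v\<in>UNIV. pr u v * reach v)" unfolding reach_def by simp
  finally show ?thesis .
qed

lemma reach_closed:
  assumes "u \<notin> T" "reach u = 1" "P u (\<sigma> u) v > 0"
  shows "reach v = 1"
proof (rule ccontr)
  assume "reach v \<noteq> 1"
  then have lt: "reach v < 1" using reach_le1 by (simp add: order_less_le)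
  have "(\<Sum>w\<in>UNIV. ennreal (P u (\<sigma> u) w) * reach w) < 1"
    by (rule avg_lt[where q="\<lambda>w. P u (\<sigma> u) w" and f=reach and v=v])
       (use nn reach_le1 sumP assms(3) lt in auto)
  then show False using reach_step[OF assms(1)] assms(2) unfolding pr_def by simp
qed

lemma trap:
  assumes W: "\<forall>u\<in>W. u \<notin> T \<and> (\<forall>v. P u (\<sigma> u) v > 0 \<longrightarrow> v \<in> W)"
  shows "u \<in> W \<Longrightarrow> reach u = 0"
proof -
  have "\<forall>u\<in>W. mm n u = 0" for n
  proof (induction n)
    case 0 then show ?case using W by simp
  next
    case (Suc n)
    show ?case
    proof
      fix u assume u: "u \<in> W"
      have "pr u v * mm n v = 0" for v
        using Suc.IH W u pr_zero by (cases "P u (\<sigma> u) v > 0") auto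
      then show "mm (Suc n) u = 0" by simp
    qed
  qed
  then show "u \<in> W \<Longrightarrow> reach u = 0" unfolding reach_def by simp
qed

lemma qr_tail: "reach v = 1 \<Longrightarrow> qr N v = (\<Sum>n. mm (n + N) v)"
proof -
  assume r: "reach v = 1"
  have fin: "(\<Sum>n<N. mm n v) \<noteq> top" using partial_le1[where N=N and u=v] by (metis ennreal_one_neq_top neq_top_trans)
  have "qr N v = (qr N v + (\<Sum>n<N. mm n v)) - (\<Sum>n<N. mm n v)" using fin by simp
  also have "\<dots> = ((\<Sum>n. mm (n + N) v) + (\<Sum>n<N. mm n v)) - (\<Sum>n<N. mm n v)"
    using cons[where N=N and u=v] r suminf_offset[of "\<lambda>n. mm n v" N] unfolding reach_def
    by (simp add: add.commute)
  also have "\<dots> = (\<Sum>n. mm (n + N) v)" using fin by simp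
  finally show ?thesis .
qed

lemma qr_lim: "reach v = 1 \<Longrightarrow> (\<lambda>N. qr N v) \<longlonglongrightarrow> 0"
proof -
  assume r: "reach v = 1"
  have e: "qr N v = 1 - (\<Sum>n<N. mm n v)" for N
  proof -
    have fin: "(\<Sum>n<N. mm n v) \<noteq> top" using partial_le1[where N=N and u=v] by (metis ennreal_one_neq_top neq_top_trans)
    have "qr N v = (qr N v + (\<Sum>n<N. mm n v)) - (\<Sum>n<N. mm n v)" using fin by simp
    also have "\<dots> = 1 - (\<Sum>n<N. mm n v)" using cons[where N=N and u=v] by (simp add: add.commute)
    finally show ?thesis .
  qed
  have "(\<lambda>N. \<Sum>n<N. mm n v) \<longlonglongrightarrow> reach v" unfolding reach_def by (rule summable_LIMSEQ[OF summableI])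
  then have "(\<lambda>N. 1 - (\<Sum>n<N. mm n v)) \<longlonglongrightarrow> 1 - reach v"
    by (intro tendsto_diff_ennreal tendsto_const) (simp_all add: r)
  then show ?thesis unfolding e using r by simp
qed


lemma exp_top: "reach u \<noteq> 1 \<Longrightarrow> exp_rew P \<sigma> T rew u = top"
proof -
  assume "reach u \<noteq> 1"
  then have "\<not> 1 \<le> reach u" using reach_le1[of u] by simp
  then have "1 - reach u \<noteq> 0" using ennreal_minus_eq_0 by blast
  then show ?thesis unfolding exp_rew_def reach_eq by simp
qed

fun QQ :: "('s \<Rightarrow> real) \<Rightarrow> nat \<Rightarrow> 's \<Rightarrow> ennreal" where
  "QQ rew 0 u = 0"
| "QQ rew (Suc N) u = (if u \<in> T then 0 else
     (\<Sum>v\<in>UNIV. pr u v * (ennreal (rew u) * qr N v + QQ rew N v)))"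

fun XX :: "('s \<Rightarrow> ennreal) \<Rightarrow> nat \<Rightarrow> 's \<Rightarrow> ennreal" where
  "XX x 0 u = x u"
| "XX x (Suc N) u = (if u \<in> T then 0 else (\<Sum>v\<in>UNIV. pr u v * XX x N v))"

lemma chain_bound:
  assumes xB: "\<forall>u. x u \<le> (if u \<in> T then 0 else ennreal (rew u) + (\<Sum>v\<in>UNIV. pr u v * x v))"
  shows "x u \<le> (\<Sum>n<N. FF rew n u) + QQ rew N u + XX x N u"
proof (induction N arbitrary: u)
  case 0 then show ?case by simp
next
  case (Suc N)
  show ?case
  proof (cases "u \<in> T")
    case True
    then have "x u = 0" using xB[rule_format, of u] by simp
    then show ?thesis by simp
  next
    case False
    let ?a = "ennreal (rew u)"
    have "x u \<le> ?a + (\<Sum>v\<in>UNIV. pr u v * x v)" using xB[rule_format, of u] False by simp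
    also have "\<dots> \<le> ?a + (\<Sum>v\<in>UNIV. pr u v * ((\<Sum>n<N. FF rew n v) + QQ rew N v + XX x N v))"
      by (intro add_left_mono sum_mono mult_left_mono Suc.IH) simp
    also have "?a = (\<Sum>v\<in>UNIV. pr u v * (?a * ((\<Sum>n<N. mm n v) + qr N v)))"
      by (simp add: cons sum_distrib_right[symmetric] sum_pr)
    also have "(\<Sum>v\<in>UNIV. pr u v * (?a * ((\<Sum>n<N. mm n v) + qr N v)))
       + (\<Sum>v\<in>UNIV. pr u v * ((\<Sum>n<N. FF rew n v) + QQ rew N v + XX x N v))
       = (\<Sum>n<Suc N. FF rew n u) + QQ rew (Suc N) u + XX x (Suc N) u"
    proof -
      have "(\<Sum>n<Suc N. FF rew n u) = (\<Sum>n<N. \<Sum>v\<in>UNIV. pr u v * (?a * mm n v + FF rew n v))"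
        using False by (simp del: sum.lessThan_Suc add: sum.lessThan_Suc_shift)
      also have "\<dots> = (\<Sum>v\<in>UNIV. \<Sum>n<N. pr u v * (?a * mm n v + FF rew n v))" by (rule sum.swap)
      finally have e1: "(\<Sum>n<Suc N. FF rew n u) = (\<Sum>v\<in>UNIV. \<Sum>n<N. pr u v * (?a * mm n v + FF rew n v))" .
      have e2: "QQ rew (Suc N) u = (\<Sum>v\<in>UNIV. pr u v * (?a * qr N v + QQ rew N v))" using False by simp
      have e3: "XX x (Suc N) u = (\<Sum>v\<in>UNIV. pr u v * XX x N v)" using False by simp
      show ?thesis unfolding e1 e2 e3 by (simp add: sum_distrib_left sum.distrib distrib_left algebra_simps)
    qed
    finally show ?thesis .
  qed
qed

lemma QQ_bound: "reach u = 1 \<Longrightarrow> QQ rew N u \<le> (\<Sum>n. FF rew (n + N) u)"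
proof (induction N arbitrary: u)
  case 0 show ?case by simp
next
  case (Suc N)
  show ?case
  proof (cases "u \<in> T")
    case True then show ?thesis by simp
  next
    case False
    let ?a = "ennreal (rew u)"
    have "QQ rew (Suc N) u = (\<Sum>v\<in>UNIV. pr u v * (?a * qr N v + QQ rew N v))" using False by simp
    also have "\<dots> \<le> (\<Sum>v\<in>UNIV. pr u v * (?a * (\<Sum>n. mm (n + N) v) + (\<Sum>n. FF rew (n + N) v)))"
    proof (intro sum_mono)
      fix v
      show "pr u v * (?a * qr N v + QQ rew N v) \<le> pr u v * (?a * (\<Sum>n. mm (n + N) v) + (\<Sum>n. FF rew (n + N) v))"
      proof (cases "P u (\<sigma> u) v > 0")
        case True
        then have r: "reach v = 1" using reach_closed[OF False Suc.prems] by blast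
        show ?thesis using qr_tail[OF r] Suc.IH[OF r] by (intro mult_left_mono add_mono) simp_all
      next
        case False then show ?thesis using pr_zero by simp
      qed
    qed
    also have "\<dots> = (\<Sum>v\<in>UNIV. \<Sum>n. pr u v * (?a * mm (n + N) v + FF rew (n + N) v))"
      by (intro sum.cong refl) (simp add: distrib_left suminf_add[OF summableI summableI, symmetric])
    also have "\<dots> = (\<Sum>n. \<Sum>v\<in>UNIV. pr u v * (?a * mm (n + N) v + FF rew (n + N) v))"
      by (rule suminf_sum[symmetric]) simp
    also have "\<dots> = (\<Sum>n. FF rew (n + Suc N) u)" using False by simp
    finally show ?thesis .
  qed
qed

lemma XX_bound:
  assumes K: "\<forall>u\<in>K. u \<notin> T \<longrightarrow> (\<forall>v. P u (\<sigma> u) v > 0 \<longrightarrow> v \<in> K)" and M: "\<forall>u\<in>K. x u \<le> M"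
  shows "u \<in> K \<Longrightarrow> XX x N u \<le> M * qr N u"
proof (induction N arbitrary: u)
  case 0 then show ?case using M by simp
next
  case (Suc N)
  show ?case
  proof (cases "u \<in> T")
    case True then show ?thesis by simp
  next
    case False
    have "XX x (Suc N) u = (\<Sum>v\<in>UNIV. pr u v * XX x N v)" using False by simp
    also have "\<dots> \<le> (\<Sum>v\<in>UNIV. pr u v * (M * qr N v))"
    proof (intro sum_mono)
      fix v
      show "pr u v * XX x N v \<le> pr u v * (M * qr N v)"
      proof (cases "P u (\<sigma> u) v > 0")
        case True
        then have "v \<in> K" using K Suc.prems False by blast
        then show ?thesis using Suc.IH by (intro mult_left_mono) simp_all
      next
        case False then show ?thesis using pr_zero by simp
      qed
    qed
    also have "\<dots> = M * qr (Suc N) u" using False by (simp add: sum_distrib_left algebra_simps)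
    finally show ?thesis .
  qed
qed

lemma chain_main:
  assumes r0: "\<forall>s. 0 \<le> rew s"
    and xB: "\<forall>u. x u \<le> (if u \<in> T then 0 else ennreal (rew u) + (\<Sum>v\<in>UNIV. pr u v * x v))"
    and K: "\<forall>u\<in>K. u \<notin> T \<longrightarrow> (\<forall>v. P u (\<sigma> u) v > 0 \<longrightarrow> v \<in> K)"
    and Kr: "\<forall>u\<in>K. reach u = 1" and Kx: "\<forall>u\<in>K. x u < top" and s: "s \<in> K"
  shows "x s \<le> exp_rew P \<sigma> T rew s"
proof -
  define M where "M = (\<Sum>u\<in>K. x u)"
  have Mtop: "M < top" unfolding M_def using Kx by simp
  have xM: "\<forall>u\<in>K. x u \<le> M" unfolding M_def by (auto intro: member_le_sum)
  define V where "V = (\<Sum>n. FF rew n s)"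
  have rs: "reach s = 1" using Kr s by blast
  have bnd: "x s \<le> V + M * qr N s" for N
  proof -
    have "x s \<le> (\<Sum>n<N. FF rew n s) + QQ rew N s + XX x N s" by (rule chain_bound[OF xB])
    also have "\<dots> \<le> (\<Sum>n<N. FF rew n s) + (\<Sum>n. FF rew (n + N) s) + M * qr N s"
      using QQ_bound[OF rs] XX_bound[OF K xM s] by (intro add_mono) auto
    also have "\<dots> = V + M * qr N s" unfolding V_def
      using suminf_offset[of "\<lambda>n. FF rew n s" N] by (simp add: add.commute)
    finally show ?thesis .
  qed
  have "(\<lambda>N. V + M * qr N s) \<longlonglongrightarrow> V + M * 0"
    by (intro tendsto_add tendsto_const ennreal_tendsto_cmult Mtop qr_lim rs)
  then have lim: "(\<lambda>N. V + M * qr N s) \<longlonglongrightarrow> V" by simp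
  have "x s \<le> V" by (rule LIMSEQ_le_const[OF lim]) (use bnd in auto)
  moreover have "exp_rew P \<sigma> T rew s = V" unfolding exp_rew_def V_def
    using FF_eq[OF r0] reach_eq rs by simp
  ultimately show ?thesis by simp
qed

end


lemma post_sum:
  assumes "is_mdp P"
  shows "(\<Sum>s'\<in>Post P s a. ennreal (P s a s') * x s') = (\<Sum>v\<in>UNIV. ennreal (P s a v) * (x v :: ennreal))"
proof (rule sum.mono_neutral_left)
  show "\<forall>i\<in>UNIV - Post P s a. ennreal (P s a i) * x i = 0"
    unfolding Post_def by (auto simp: ennreal_eq_0_iff)
qed (auto simp: Post_def)

lemma strategy_exists:
  assumes "is_mdp P"
  shows "is_strategy P (\<lambda>u. SOME a. a \<in> Act P u)"
proof -
  have "\<forall>u. \<exists>a. a \<in> Act P u" using assms unfolding is_mdp_def Act_def by blast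
  then show ?thesis unfolding is_strategy_def by (metis someI_ex)
qed

lemma reach_le1_all:
  assumes "is_mdp P" "is_strategy P \<tau>"
  shows "reach_prob P \<tau> T u \<le> 1"
proof -
  interpret A: mc P \<tau> T using assms by unfold_locales
  show ?thesis using A.reach_eq A.reach_le1 by simp
qed

lemma min_one_iff:
  assumes "is_mdp P"
  shows "reach_prob_opt Min P T u = 1 \<longleftrightarrow> (\<forall>\<tau>. is_strategy P \<tau> \<longrightarrow> reach_prob P \<tau> T u = 1)"
proof
  assume h: "reach_prob_opt Min P T u = 1"
  show "\<forall>\<tau>. is_strategy P \<tau> \<longrightarrow> reach_prob P \<tau> T u = 1"
  proof (intro allI impI)
    fix \<tau> assume t: "is_strategy P \<tau>"
    have "Inf {reach_prob P \<sigma> T u |\<sigma>. is_strategy P \<sigma>} \<le> reach_prob P \<tau> T u"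
      by (rule Inf_lower) (use t in blast)
    then have "1 \<le> reach_prob P \<tau> T u" using h unfolding reach_prob_opt_def by simp
    then show "reach_prob P \<tau> T u = 1" using reach_le1_all[OF assms t] by (simp add: antisym)
  qed
next
  assume h: "\<forall>\<tau>. is_strategy P \<tau> \<longrightarrow> reach_prob P \<tau> T u = 1"
  have ne: "is_strategy P (\<lambda>u. SOME a. a \<in> Act P u)" by (rule strategy_exists[OF assms])
  have "{reach_prob P \<sigma> T u |\<sigma>. is_strategy P \<sigma>} = {1}"
  proof (rule set_eqI, rule iffI)
    fix y assume "y \<in> {reach_prob P \<sigma> T u |\<sigma>. is_strategy P \<sigma>}"
    then show "y \<in> {1}" using h by auto
  next
    fix y :: ennreal assume "y \<in> {1}"
    then have "y = reach_prob P (\<lambda>u. SOME a. a \<in> Act P u) T u" using h ne by simp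
    then show "y \<in> {reach_prob P \<sigma> T u |\<sigma>. is_strategy P \<sigma>}" using ne by blast
  qed
  then show "reach_prob_opt Min P T u = 1" unfolding reach_prob_opt_def by simp
qed

lemma min_closed:
  assumes mdp: "is_mdp P" and sT: "s \<notin> T" and a: "a \<in> Act P s" and ps: "P s a s' > 0"
    and all1: "\<forall>\<tau>. is_strategy P \<tau> \<longrightarrow> reach_prob P \<tau> T s = 1"
  shows "\<forall>\<tau>. is_strategy P \<tau> \<longrightarrow> reach_prob P \<tau> T s' = 1"
proof (intro allI impI)
  fix \<tau> assume t: "is_strategy P \<tau>"
  define \<tau>2 where "\<tau>2 = \<tau>(s := a)"
  have t2: "is_strategy P \<tau>2" using t a unfolding is_strategy_def \<tau>2_def by auto
  interpret A: mc P \<tau> T using mdp t by unfold_locales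
  interpret B: mc P \<tau>2 T using mdp t2 by unfold_locales
  have fs: "A.reach s = 1" using all1 t A.reach_eq by metis
  have gs: "B.reach s = 1" using all1 t2 B.reach_eq by metis
  define Aset where "Aset = {u. B.reach u = 1}"
  have "B.reach s' = 1"
    by (rule B.reach_closed[OF sT gs]) (simp add: \<tau>2_def ps)
  then have s'A: "s' \<in> Aset" unfolding Aset_def by simp
  show "reach_prob P \<tau> T s' = 1"
  proof (rule ccontr)
    assume "reach_prob P \<tau> T s' \<noteq> 1"
    then have fs'1: "A.reach s' < 1" using A.reach_eq A.reach_le1[of s'] by (simp add: order_less_le)
    define m where "m = Lattices_Big.Min (A.reach ` Aset)"
    have finA: "finite (A.reach ` Aset)" by simp
    have m_le: "u \<in> Aset \<Longrightarrow> m \<le> A.reach u" for u unfolding m_def using finA by simp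
    have "m \<in> A.reach ` Aset" unfolding m_def using finA s'A by (intro Min_in) auto
    then obtain u0 where u0: "u0 \<in> Aset" "A.reach u0 = m" by blast
    have m1: "m < 1" using m_le[OF s'A] fs'1 by simp
    define W where "W = {u \<in> Aset. A.reach u = m}"
    have trapW: "\<forall>u\<in>W. u \<notin> T \<and> (\<forall>v. P u (\<tau>2 u) v > 0 \<longrightarrow> v \<in> W)"
    proof
      fix u assume uW: "u \<in> W"
      have uT: "u \<notin> T" using uW m1 A.reach_T unfolding W_def by force
      have us: "u \<noteq> s" using uW m1 fs unfolding W_def by force
      have tu: "\<tau>2 u = \<tau> u" using us unfolding \<tau>2_def by simp
      have gu: "B.reach u = 1" using uW unfolding W_def Aset_def by simp
      have succA: "P u (\<tau> u) v > 0 \<Longrightarrow> v \<in> Aset" for v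
        unfolding Aset_def using B.reach_closed[OF uT gu, of v] tu by simp
      have "\<forall>v. P u (\<tau> u) v > 0 \<longrightarrow> v \<in> W"
      proof (intro allI impI)
        fix v assume pv: "P u (\<tau> u) v > 0"
        have vA: "v \<in> Aset" by (rule succA[OF pv])
        show "v \<in> W"
        proof (rule ccontr)
          assume "v \<notin> W"
          then have "m < A.reach v" using m_le[OF vA] vA unfolding W_def by (simp add: order_less_le)
          then have "m < (\<Sum>w\<in>UNIV. ennreal (P u (\<tau> u) w) * A.reach w)"
            by (intro avg_gt[where q="\<lambda>w. P u (\<tau> u) w" and v=v])
               (use A.nn A.sumP A.reach_le1 pv m_le succA in auto)
          also have "\<dots> = A.reach u" using A.reach_step[OF uT] unfolding A.pr_def by simp
          also have "\<dots> = m" using uW unfolding W_def by simp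
          finally show False by simp
        qed
      qed
      then show "u \<notin> T \<and> (\<forall>v. P u (\<tau>2 u) v > 0 \<longrightarrow> v \<in> W)" using uT tu by simp
    qed
    have "B.reach u0 = 0" by (rule B.trap[OF trapW]) (simp add: W_def u0)
    moreover have "B.reach u0 = 1" using u0 unfolding Aset_def by simp
    ultimately show False by simp
  qed
qed


theorem lemma6:
  fixes P :: "'s::finite \<Rightarrow> 'a::finite \<Rightarrow> 's \<Rightarrow> real"
    and T :: "'s set" and rew :: "'s \<Rightarrow> real" and opt :: opt and x :: "'s \<Rightarrow> ennreal"
  assumes "is_mdp P"
    and "\<forall>s. 0 \<le> rew s"
    and "\<forall>s. x s \<le> bellman opt P T rew x s"
    and "\<forall>s. reach_prob_opt (dual opt) P T s = 1 \<longrightarrow> x s < \<infinity>"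
  shows "\<forall>s. x s \<le> exp_rew_opt opt P T rew s"
proof (cases opt)
  case Min
  show ?thesis
  proof
    fix s
    have "x s \<le> exp_rew P \<sigma> T rew s" if \<sigma>: "is_strategy P \<sigma>" for \<sigma>
    proof -
      interpret A: mc P \<sigma> T using assms(1) \<sigma> by unfold_locales
      have xB: "\<forall>u. x u \<le> (if u \<in> T then 0 else ennreal (rew u) + (\<Sum>v\<in>UNIV. A.pr u v * x v))"
      proof
        fix u
        have "x u \<le> bellman Min P T rew x u" using assms(3) Min by simp
        also have "\<dots> \<le> (if u \<in> T then 0 else ennreal (rew u) + (\<Sum>v\<in>UNIV. A.pr u v * x v))"
        proof (cases "u \<in> T")
          case False
          have "\<sigma> u \<in> Act P u" using \<sigma> unfolding is_strategy_def by blast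
          then have "Inf ((\<lambda>a. \<Sum>s'\<in>Post P u a. ennreal (P u a s') * x s') ` Act P u)
              \<le> (\<Sum>s'\<in>Post P u (\<sigma> u). ennreal (P u (\<sigma> u) s') * x s')" by (rule INF_lower)
          then show ?thesis using False unfolding bellman_def A.pr_def post_sum[OF assms(1)]
            by (simp add: add_left_mono)
        qed (simp add: bellman_def)
        finally show "x u \<le> (if u \<in> T then 0 else ennreal (rew u) + (\<Sum>v\<in>UNIV. A.pr u v * x v))" .
      qed
      show ?thesis
      proof (cases "A.reach s = 1")
        case False then show ?thesis using A.exp_top[OF False] by simp
      next
        case True
        show ?thesis
        proof (rule A.chain_main[OF assms(2) xB, where K="{u. A.reach u = 1}"])
          show "\<forall>u\<in>{u. A.reach u = 1}. u \<notin> T \<longrightarrow> (\<forall>v. 0 < P u (\<sigma> u) v \<longrightarrow> v \<in> {u. A.reach u = 1})"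
            using A.reach_closed by blast
          show "\<forall>u\<in>{u. A.reach u = 1}. A.reach u = 1" by simp
          show "s \<in> {u. A.reach u = 1}" using True by simp
          show "\<forall>u\<in>{u. A.reach u = 1}. x u < top"
          proof
            fix u assume "u \<in> {u. A.reach u = 1}"
            then have r1: "reach_prob P \<sigma> T u = 1" using A.reach_eq by simp
            have "Sup {reach_prob P \<tau> T u |\<tau>. is_strategy P \<tau>} = 1"
            proof (rule antisym)
              show "Sup {reach_prob P \<tau> T u |\<tau>. is_strategy P \<tau>} \<le> 1"
                by (rule Sup_least) (use reach_le1_all[OF assms(1)] in blast)
              have "reach_prob P \<sigma> T u \<le> Sup {reach_prob P \<tau> T u |\<tau>. is_strategy P \<tau>}"
                by (rule Sup_upper) (use \<sigma> in blast)
              then show "1 \<le> Sup {reach_prob P \<tau> T u |\<tau>. is_strategy P \<tau>}" using r1 by simp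
            qed
            then have "reach_prob_opt (dual opt) P T u = 1" using Min unfolding reach_prob_opt_def by simp
            then show "x u < top" using assms(4) by simp
          qed
        qed
      qed
    qed
    then show "x s \<le> exp_rew_opt opt P T rew s" unfolding exp_rew_opt_def Min
      by (auto intro!: Inf_greatest)
  qed
next
  case Max
  show ?thesis
  proof
    fix s
    show "x s \<le> exp_rew_opt opt P T rew s"
    proof (cases "reach_prob_opt Min P T s = 1")
      case False
      define \<sigma>0 where "\<sigma>0 = (\<lambda>u. SOME a. a \<in> Act P u)"
      have s0: "is_strategy P \<sigma>0" unfolding \<sigma>0_def by (rule strategy_exists[OF assms(1)])
      have "Inf {reach_prob P \<tau> T s |\<tau>. is_strategy P \<tau>} \<le> reach_prob P \<sigma>0 T s"
        by (rule Inf_lower) (use s0 in blast)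
      also have "\<dots> \<le> 1" by (rule reach_le1_all[OF assms(1) s0])
      finally have "Inf {reach_prob P \<tau> T s |\<tau>. is_strategy P \<tau>} < 1"
        using False unfolding reach_prob_opt_def by (simp add: order_less_le)
      then obtain \<tau> where t: "is_strategy P \<tau>" and lt: "reach_prob P \<tau> T s < 1"
        by (auto simp: Inf_less_iff)
      interpret A: mc P \<tau> T using assms(1) t by unfold_locales
      have "exp_rew P \<tau> T rew s = top" using lt A.reach_eq by (intro A.exp_top) simp
      moreover have "exp_rew P \<tau> T rew s \<le> exp_rew_opt opt P T rew s"
        unfolding exp_rew_opt_def Max opt_of.simps by (rule Sup_upper) (use t in auto)
      ultimately show ?thesis by (metis top.extremum_unique top_greatest)
    next
      case True
      define g where "g u a = (\<Sum>v\<in>UNIV. ennreal (P u a v) * x v)" for u a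
      define \<sigma> where "\<sigma> = (\<lambda>u. SOME a. a \<in> Act P u \<and> g u a = Sup (g u ` Act P u))"
      have ex: "\<exists>a. a \<in> Act P u \<and> g u a = Sup (g u ` Act P u)" for u
      proof -
        have ne: "Act P u \<noteq> {}" using assms(1) unfolding is_mdp_def Act_def by blast
        have "Lattices_Big.Max (g u ` Act P u) \<in> g u ` Act P u" using ne by (intro Max_in) auto
        moreover have "Lattices_Big.Max (g u ` Act P u) = Sup (g u ` Act P u)" using ne by (intro Max_Sup) auto
        ultimately show ?thesis by force
      qed
      have \<sigma>g: "\<sigma> u \<in> Act P u \<and> g u (\<sigma> u) = Sup (g u ` Act P u)" for u
        unfolding \<sigma>_def by (rule someI_ex[OF ex])
      have st: "is_strategy P \<sigma>" unfolding is_strategy_def using \<sigma>g by blast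
      interpret A: mc P \<sigma> T using assms(1) st by unfold_locales
      have xB: "\<forall>u. x u \<le> (if u \<in> T then 0 else ennreal (rew u) + (\<Sum>v\<in>UNIV. A.pr u v * x v))"
      proof
        fix u
        have "x u \<le> bellman Max P T rew x u" using assms(3) Max by simp
        also have "\<dots> = (if u \<in> T then 0 else ennreal (rew u) + (\<Sum>v\<in>UNIV. A.pr u v * x v))"
          unfolding bellman_def A.pr_def post_sum[OF assms(1)] using \<sigma>g[of u]
          by (simp add: g_def)
        finally show "x u \<le> (if u \<in> T then 0 else ennreal (rew u) + (\<Sum>v\<in>UNIV. A.pr u v * x v))" .
      qed
      define K where "K = {u. A.reach u = 1 \<and> reach_prob_opt Min P T u = 1}"
      have "x s \<le> exp_rew P \<sigma> T rew s"
      proof (rule A.chain_main[OF assms(2) xB, where K=K])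
        show "\<forall>u\<in>K. u \<notin> T \<longrightarrow> (\<forall>v. 0 < P u (\<sigma> u) v \<longrightarrow> v \<in> K)"
        proof (intro ballI impI allI)
          fix u v assume uK: "u \<in> K" and uT: "u \<notin> T" and pv: "0 < P u (\<sigma> u) v"
          have "A.reach v = 1" using A.reach_closed[OF uT _ pv] uK unfolding K_def by simp
          moreover have "reach_prob_opt Min P T v = 1"
            using min_closed[OF assms(1) uT conjunct1[OF \<sigma>g[of u]] pv] uK
            unfolding K_def min_one_iff[OF assms(1)] by simp
          ultimately show "v \<in> K" unfolding K_def by simp
        qed
        show "\<forall>u\<in>K. A.reach u = 1" unfolding K_def by simp
        show "\<forall>u\<in>K. x u < top" using assms(4) Max unfolding K_def by simp
        have "reach_prob P \<sigma> T s = 1" using True st unfolding min_one_iff[OF assms(1)] by blast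
        then show "s \<in> K" unfolding K_def using True A.reach_eq by simp
      qed
      also have "\<dots> \<le> exp_rew_opt opt P T rew s"
        unfolding exp_rew_opt_def Max opt_of.simps by (rule Sup_upper) (use st in auto)
      finally show ?thesis .
    qed
  qed
qed

end
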